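(* Consider mechanisms that use only quantile information about the seller's distribution: such a mechanism is a probability distribution $G$ on $[0,1]$ (fixed independently of $F_S,F_B$); it draws $u\sim G$ and posts the price $p=F_S^{-1}(u)$. For every such $G$, \[\inf_{F_S,F_B\in\Delta_{L^1}(\mathbb{R}_+)}\frac{\mathsf{W}(G;F_S,F_B)}{\mathsf{OPT\text{-}W}(F_S,F_B)}\ \le\ 1-\frac1e .\] That is, no (possibly randomized) mechanism using only quantile knowledge of the seller's distribution guarantees more than a $(1-1/e)$ fraction of the optimal welfare.
   Context: Asymmetric bilateral trade: $S\sim F_S$, $B\sim F_B$ independent, distributions on $[0,\infty)$ with finite mean. Posting price $p$, trade iff $B>p\ge S$; $\mathsf{W}(p;F_S,F_B)=\mathbb{E}[S+(B-S)\mathbf 1_{B>p\ge S}]$ and $\mathsf{OPT\text{-}W}(F_S,F_B)=\mathbb{E}[\max\{B,S\}]$. $F_S^{-1}(u)=\inf\{x:F_S(x)\ge u\}$ is the quantile function, and $\mathsf{W}(G;F_S,F_B)=\mathbb{E}_{u\sim G}[\mathsf{W}(F_S^{-1}(u);F_S,F_B)]$. *)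

theory Defs
  imports "HOL-Probability.Probability"
begin

definition valid_dist :: "real measure \<Rightarrow> bool" where
  "valid_dist F \<longleftrightarrow> prob_space F \<and> sets F = sets borel \<and>
     (AE x in F. 0 \<le> x) \<and> integrable F (\<lambda>x. x)"

text \<open>Quantile function F^{-1}(u) = inf {x. F(x) \<ge> u}, taken in the extended reals
  (so inf of the whole line is -\<infinity> and inf of the empty set is +\<infinity>).\<close>
definition quantile :: "real measure \<Rightarrow> real \<Rightarrow> ereal" where
  "quantile F u = Inf {ereal x | x. u \<le> cdf F x}"

definition welfare_price :: "real measure \<Rightarrow> real measure \<Rightarrow> ereal \<Rightarrow> real" where
  "welfare_price FS FB p =
     (\<integral>sb. fst sb + (snd sb - fst sb) *
            (if p < ereal (snd sb) \<and> ereal (fst sb) \<le> p then 1 else 0) \<partial>(FS \<Otimes>\<^sub>M FB))"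

definition welfare_mech :: "real measure \<Rightarrow> real measure \<Rightarrow> real measure \<Rightarrow> real" where
  "welfare_mech G FS FB = (\<integral>u. welfare_price FS FB (quantile FS u) \<partial>G)"

definition opt_welfare :: "real measure \<Rightarrow> real measure \<Rightarrow> real" where
  "opt_welfare FS FB = (\<integral>sb. max (snd sb) (fst sb) \<partial>(FS \<Otimes>\<^sub>M FB))"

end

theory Submission imports Defs begin


lemma pair_return:
  fixes M :: "real measure"
  assumes "prob_space M" "sets M = sets borel"
  shows "M \<Otimes>\<^sub>M return borel (c::real) = distr M (borel \<Otimes>\<^sub>M borel) (\<lambda>s. (s, c))"
proof (rule pair_measure_eqI)
  show "sigma_finite_measure M" using assms(1) by (simp add: prob_space_imp_sigma_finite)
  show "sigma_finite_measure (return borel c)"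
    by (simp add: prob_space_imp_sigma_finite prob_space_return)
  show "sets (M \<Otimes>\<^sub>M return borel c) = sets (distr M (borel \<Otimes>\<^sub>M borel) (\<lambda>s. (s, c)))"
  proof -
    have "sets (M \<Otimes>\<^sub>M return borel c) = sets (borel \<Otimes>\<^sub>M borel)"
      by (rule sets_pair_measure_cong[OF assms(2)]) simp
    then show ?thesis by (simp only: sets_distr)
  qed
  fix A B assume A: "A \<in> sets M" and B: "B \<in> sets (return borel c)"
  show "emeasure M A * emeasure (return borel c) B = emeasure (distr M (borel \<Otimes>\<^sub>M borel) (\<lambda>s. (s, c))) (A \<times> B)"
  proof -
  have sp: "space M = UNIV" using assms(2) sets_eq_imp_space_eq by fastforce
  have m: "(\<lambda>s. (s, c)) \<in> measurable M (borel \<Otimes>\<^sub>M borel)"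
    by (simp add: measurable_cong_sets[OF assms(2) refl])
  have B': "B \<in> sets borel" using B by simp
  have A': "A \<in> sets borel" using A assms(2) by simp
  have AB: "A \<times> B \<in> sets (borel \<Otimes>\<^sub>M borel)" using A' B' by (rule pair_measureI)
  have "(\<lambda>s. (s, c)) -` (A \<times> B) \<inter> space M = (if c \<in> B then A else {})"
    using sp by auto
  then show ?thesis
    using B' by (simp add: emeasure_distr[OF m AB] split: split_indicator)
  qed
qed


lemma wp_nonneg:
  assumes "valid_dist FS" "valid_dist FB"
  shows "0 \<le> welfare_price FS FB p"
proof -
  have pFS: "prob_space FS" and sFS: "sets FS = sets borel" and aFS: "AE x in FS. 0 \<le> x"
    using assms(1) unfolding valid_dist_def by auto
  have pFB: "prob_space FB" and sFB: "sets FB = sets borel" and aFB: "AE x in FB. 0 \<le> x"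
    using assms(2) unfolding valid_dist_def by auto
  interpret pair_sigma_finite FS FB
    unfolding pair_sigma_finite_def using pFS pFB by (simp add: prob_space_imp_sigma_finite)
  have sets: "sets (FS \<Otimes>\<^sub>M FB) = sets (borel \<Otimes>\<^sub>M borel)"
    by (rule sets_pair_measure_cong[OF sFS sFB])
  have "Measurable.pred (borel \<Otimes>\<^sub>M borel) (\<lambda>x::real\<times>real. 0 \<le> fst x \<and> 0 \<le> snd x)"
    by measurable
  then have "Measurable.pred (FS \<Otimes>\<^sub>M FB) (\<lambda>x::real\<times>real. 0 \<le> fst x \<and> 0 \<le> snd x)"
    by (simp add: measurable_cong_sets[OF sets refl])
  then have meas: "{x\<in>space (FS \<Otimes>\<^sub>M FB). 0 \<le> fst x \<and> 0 \<le> snd x} \<in> sets (FS \<Otimes>\<^sub>M FB)"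
    by (simp add: pred_def)
  have ae: "AE x in FS \<Otimes>\<^sub>M FB. 0 \<le> fst x \<and> 0 \<le> snd x"
    by (rule AE_pair_measure[OF meas]) (use aFS aFB in \<open>auto elim!: eventually_mono\<close>)
  show ?thesis unfolding welfare_price_def
    by (rule integral_nonneg_AE) (use ae in \<open>eventually_elim, auto\<close>)
qed

lemma ind_int:
  assumes "prob_space M" "A \<in> sets M"
  shows "integrable M (indicator A :: _ \<Rightarrow> real)"
proof (rule integrable_real_indicator[OF assms(2)])
  interpret prob_space M by fact
  have "emeasure M A \<le> 1" by (rule emeasure_le_1)
  also have "(1::ennreal) < \<infinity>" by simp
  finally show "emeasure M A < \<infinity>" .
qed

definition Qf :: "real \<Rightarrow> real \<Rightarrow> real \<Rightarrow> real" where
  "Qf a d v = (if v \<le> a then d * v / a else 1)"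

lemma Qf_meas[measurable]: "Qf a d \<in> borel_measurable borel"
  unfolding Qf_def by measurable

definition UU :: "real measure" where "UU = uniform_measure lborel {0..1}"

definition FSi :: "real \<Rightarrow> real \<Rightarrow> real measure" where
  "FSi a d = distr UU borel (Qf a d)"

lemma UU_prob: "prob_space UU"
  unfolding UU_def by (rule prob_space_uniform_measure) auto

lemma sets_UU[simp, measurable_cong]: "sets UU = sets borel"
  unfolding UU_def by simp

lemma space_UU[simp]: "space UU = UNIV"
  unfolding UU_def by simp

lemma measure_UU: "A \<in> sets borel \<Longrightarrow> measure UU A = measure lborel ({0..1} \<inter> A)"
  unfolding UU_def by (subst measure_uniform_measure) simp_all

lemma AE_UU: "AE v in UU. 0 \<le> v \<and> v \<le> 1"
  unfolding UU_def by (rule AE_uniform_measureI) simp_all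

lemma Qf_meas_UU[measurable]: "Qf a d \<in> borel_measurable UU"
  by (simp only: measurable_cong_sets[OF sets_UU refl] Qf_meas)

lemma Qf_bounds:
  assumes "0 < a" "0 \<le> d" "d \<le> 1" "0 \<le> v"
  shows "0 \<le> Qf a d v" "Qf a d v \<le> d + indicator {a<..} v"
  using assms by (auto simp: Qf_def divide_le_eq mult_left_mono split: split_indicator)

lemma Qf_le1:
  assumes "0 < a" "0 \<le> d" "d \<le> 1"
  shows "Qf a d v \<le> 1"
proof (cases "v \<le> a")
  case True
  then have "d * v \<le> d * a" using assms by (simp add: mult_left_mono)
  also have "\<dots> \<le> a" using assms by (simp add: mult_le_one)
  finally show ?thesis using True assms by (simp add: Qf_def divide_le_eq)
qed (simp add: Qf_def)

lemma FSi_prob: "prob_space (FSi a d)"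
  unfolding FSi_def by (rule prob_space.prob_space_distr[OF UU_prob]) simp

lemma sets_FSi[simp, measurable_cong]: "sets (FSi a d) = sets borel"
  unfolding FSi_def by simp

lemma integrable_Qf:
  assumes "0 < a" "0 \<le> d" "d \<le> 1"
  shows "integrable UU (Qf a d)"
proof -
  interpret prob_space UU by (rule UU_prob)
  show ?thesis
  proof (rule integrable_const_bound[where B=1])
    show "AE x in UU. norm (Qf a d x) \<le> 1"
      using AE_UU by eventually_elim (use assms Qf_bounds(1) Qf_le1 in auto)
  qed simp
qed

lemma valid_FSi:
  assumes "0 < a" "0 \<le> d" "d \<le> 1"
  shows "valid_dist (FSi a d)"
  unfolding valid_dist_def
proof (intro conjI)
  show "prob_space (FSi a d)" by (rule FSi_prob)
  show "sets (FSi a d) = sets borel" by simp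
  show "AE x in FSi a d. 0 \<le> x"
    unfolding FSi_def
  proof (subst AE_distr_iff)
    show "AE x in UU. 0 \<le> Qf a d x"
      using AE_UU by eventually_elim (use assms Qf_bounds(1) in auto)
  qed auto
  show "integrable (FSi a d) (\<lambda>x. x)"
    unfolding FSi_def by (subst integrable_distr_eq) (auto intro: integrable_Qf[OF assms])
qed

lemma valid_ret: "valid_dist (return borel (1::real))"
  unfolding valid_dist_def
proof (intro conjI)
  interpret prob_space "return borel (1::real)" by (rule prob_space_return) simp
  show "prob_space (return borel (1::real))" by unfold_locales
  show "sets (return borel (1::real)) = sets borel" by simp
  show "AE x in return borel (1::real). 0 \<le> x" by (subst AE_return) auto
  show "integrable (return borel (1::real)) (\<lambda>x. x)"
    by (rule integrable_const_bound[where B=1]) (auto simp: AE_return)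
qed

lemma cdf_FSi: "cdf (FSi a d) x = measure lborel ({0..1} \<inter> {v. Qf a d v \<le> x})"
proof -
  have "cdf (FSi a d) x = measure UU (Qf a d -` {..x} \<inter> space UU)"
    unfolding cdf_def FSi_def by (rule measure_distr) auto
  also have "\<dots> = measure lborel ({0..1} \<inter> {v. Qf a d v \<le> x})"
    by (subst measure_UU) (auto simp: vimage_def)
  finally show ?thesis .
qed

lemma cdf_FSi_low:
  assumes "0 < a" "a \<le> 1" "0 < d" "d < 1" "0 \<le> u" "u \<le> a"
  shows "cdf (FSi a d) (d * u / a) = u"
proof -
  have "{0..1} \<inter> {v. Qf a d v \<le> d * u / a} = {0..u}"
  proof (intro equalityI subsetI)
    fix v assume v: "v \<in> {0..1} \<inter> {v. Qf a d v \<le> d * u / a}"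
    have "d * u / a \<le> d" using assms by (simp add: divide_le_eq mult_left_mono)
    then have "v \<le> a" using v assms by (auto simp: Qf_def split: if_splits)
    then have "d * v / a \<le> d * u / a" using v by (simp add: Qf_def)
    then have "d * v \<le> d * u" using assms by (simp add: divide_le_eq)
    then have "v \<le> u" using assms by simp
    then show "v \<in> {0..u}" using v by auto
  next
    fix v assume "v \<in> {0..u}"
    then show "v \<in> {0..1} \<inter> {v. Qf a d v \<le> d * u / a}"
      using assms by (auto simp: Qf_def divide_right_mono mult_left_mono)
  qed
  then show ?thesis using assms by (simp add: cdf_FSi)
qed

lemma cdf_FSi_high:
  assumes "0 < a" "a \<le> 1" "x < 1"
  shows "cdf (FSi a d) x \<le> a"
proof -
  have "{0..1} \<inter> {v. Qf a d v \<le> x} \<subseteq> {0..a}"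
    using assms by (auto simp: Qf_def split: if_splits)
  then have "measure lborel ({0..1} \<inter> {v. Qf a d v \<le> x}) \<le> measure lborel {0..a}"
    by (intro measure_mono_fmeasurable) (auto intro: fmeasurable_compact)
  then show ?thesis using assms by (simp add: cdf_FSi)
qed

lemma pair_FSi: "FSi a d \<Otimes>\<^sub>M return borel (1::real) = distr (FSi a d) (borel \<Otimes>\<^sub>M borel) (\<lambda>s. (s, 1))"
  by (rule pair_return[OF FSi_prob]) simp

lemma meas_pair1[measurable]: "(\<lambda>s. (s, 1::real)) \<in> measurable (FSi a d) (borel \<Otimes>\<^sub>M borel)"
  by (simp add: measurable_cong_sets[OF sets_FSi refl])

lemma wp_FSi: "welfare_price (FSi a d) (return borel 1) p =
   (\<integral>s. s + (1 - s) * (if p < 1 \<and> ereal s \<le> p then 1 else 0) \<partial>FSi a d)"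
  unfolding welfare_price_def pair_FSi
  by (subst integral_distr) (auto simp: one_ereal_def)

lemma opt_FSi:
  assumes "0 < a" "0 \<le> d" "d \<le> 1"
  shows "opt_welfare (FSi a d) (return borel 1) = 1"
proof -
  have "opt_welfare (FSi a d) (return borel 1) = (\<integral>s. max 1 s \<partial>FSi a d)"
    unfolding opt_welfare_def pair_FSi by (subst integral_distr) auto
  also have "\<dots> = (\<integral>v. max 1 (Qf a d v) \<partial>UU)"
    unfolding FSi_def by (subst integral_distr) auto
  also have "\<dots> = (\<integral>v. 1 \<partial>UU)"
  proof -
    have "\<And>v. max 1 (Qf a d v) = 1" using Qf_le1[OF assms] by (simp add: max_absorb1)
    then show ?thesis by (intro Bochner_Integration.integral_cong) auto
  qed
  also have "\<dots> = 1" using prob_space.prob_space[OF UU_prob] by simp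
  finally show ?thesis .
qed

lemma ES_FSi:
  assumes "0 < a" "a \<le> 1" "0 \<le> d" "d \<le> 1"
  shows "(\<integral>s. s \<partial>FSi a d) \<le> 1 - a + d"
proof -
  interpret prob_space UU by (rule UU_prob)
  have p1: "prob UNIV = 1" using prob_space by (metis space_UU)
  have "(\<integral>s. s \<partial>FSi a d) = (\<integral>v. Qf a d v \<partial>UU)"
    unfolding FSi_def by (subst integral_distr) auto
  also have "\<dots> \<le> (\<integral>v. d + indicator {a<..} v \<partial>UU)"
  proof (rule integral_mono_AE')
    show "integrable UU (\<lambda>v. d + indicator {a<..} v)"
      by (intro Bochner_Integration.integrable_add integrable_const ind_int UU_prob) auto
    show "AE v in UU. Qf a d v \<le> d + indicator {a<..} v"
      using AE_UU by eventually_elim (use assms Qf_bounds(2) in auto)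
    show "AE v in UU. 0 \<le> d + (indicator {a<..} v :: real)"
      using assms by auto
  qed
  also have "\<dots> = d + measure UU {a<..}"
    by (subst Bochner_Integration.integral_add) (auto intro!: ind_int UU_prob simp: p1)
  also have "measure UU {a<..} = 1 - a"
  proof -
    have "{0..1} \<inter> {a<..} = {a<..1::real}" using assms by auto
    then show ?thesis using assms by (simp add: measure_UU)
  qed
  finally show ?thesis by simp
qed

lemma wp_le:
  assumes "0 < a" "0 \<le> d" "d \<le> 1" "p \<le> ereal x0"
  shows "welfare_price (FSi a d) (return borel 1) p \<le> (\<integral>s. s \<partial>FSi a d) + cdf (FSi a d) x0"
proof -
  interpret prob_space "FSi a d" by (rule FSi_prob)
  have vd: "valid_dist (FSi a d)" by (rule valid_FSi[OF assms(1-3)])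
  have int: "integrable (FSi a d) (\<lambda>s. s)" using vd unfolding valid_dist_def by blast
  have nn: "AE s in FSi a d. 0 \<le> s" using vd unfolding valid_dist_def by blast
  have "welfare_price (FSi a d) (return borel 1) p \<le> (\<integral>s. s + indicator {..x0} s \<partial>FSi a d)"
    unfolding wp_FSi
  proof (rule integral_mono_AE')
    show "integrable (FSi a d) (\<lambda>s. s + indicator {..x0} s)"
      by (intro Bochner_Integration.integrable_add int ind_int FSi_prob) auto
    show "AE s in FSi a d. s + (1 - s) * (if p < 1 \<and> ereal s \<le> p then 1 else 0) \<le> s + indicator {..x0} s"
      using nn
    proof eventually_elim
      case (elim s)
      show ?case
      proof (cases "p < 1 \<and> ereal s \<le> p")
        case True
        then have "ereal s \<le> ereal x0" using assms(4) by (meson order_trans)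
        then have "s \<le> x0" by simp
        then show ?thesis using True elim by (simp add: indicator_def)
      qed (auto simp: indicator_def)
    qed
    show "AE s in FSi a d. 0 \<le> s + indicator {..x0} s"
      using nn by eventually_elim (auto simp: indicator_def)
  qed
  also have "\<dots> = (\<integral>s. s \<partial>FSi a d) + cdf (FSi a d) x0"
    by (subst Bochner_Integration.integral_add) (auto intro!: int ind_int FSi_prob simp: cdf_def)
  finally show ?thesis .
qed

lemma wp_high:
  assumes "1 \<le> p"
  shows "welfare_price (FSi a d) (return borel 1) p = (\<integral>s. s \<partial>FSi a d)"
proof -
  have "\<not> p < 1" using assms by (simp add: not_less)
  then show ?thesis unfolding wp_FSi by simp
qed

lemma wp_bound:
  assumes "0 < a" "a \<le> 1" "0 < d" "d < 1" "0 \<le> u" "u \<le> 1"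
  shows "welfare_price (FSi a d) (return borel 1) (quantile (FSi a d) u) \<le> 1 - a + d + (if u \<le> a then u else 0)"
proof (cases "u \<le> a")
  case True
  have c: "cdf (FSi a d) (d * u / a) = u" using cdf_FSi_low[OF assms(1-4,5) True] .
  have "quantile (FSi a d) u \<le> ereal (d * u / a)"
    unfolding quantile_def by (rule Inf_lower) (use c in auto)
  have "welfare_price (FSi a d) (return borel 1) (quantile (FSi a d) u) \<le> (\<integral>s. s \<partial>FSi a d) + cdf (FSi a d) (d * u / a)"
    by (rule wp_le) (use assms \<open>quantile (FSi a d) u \<le> ereal (d * u / a)\<close> in auto)
  with assms c ES_FSi[OF assms(1,2), of d] True
  show ?thesis by simp
next
  case False
  have "1 \<le> quantile (FSi a d) u"
    unfolding quantile_def
  proof (rule Inf_greatest)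
    fix y assume "y \<in> {ereal x |x. u \<le> cdf (FSi a d) x}"
    then obtain x where x: "y = ereal x" "u \<le> cdf (FSi a d) x" by blast
    have "\<not> x < 1" using cdf_FSi_high[OF assms(1,2), of x d] x False by linarith
    then show "1 \<le> y" using x by (simp add: one_ereal_def)
  qed
  from wp_high[OF this] ES_FSi[OF assms(1,2), of d] assms False show ?thesis by simp
qed

definition hh :: "real \<Rightarrow> real \<Rightarrow> real" where
  "hh a u = (if 0 \<le> u \<and> u \<le> a then u else 0)"

lemma hh_meas[measurable]: "hh a \<in> borel_measurable borel"
  unfolding hh_def by measurable

lemma hh_integrable:
  assumes "prob_space G" "sets G = sets borel"
  shows "integrable G (hh a)"
proof -
  interpret prob_space G by fact
  show ?thesis
  proof (rule integrable_const_bound[where B="\<bar>a\<bar>"])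
    show "AE x in G. norm (hh a x) \<le> \<bar>a\<bar>" by (intro AE_I2) (simp add: hh_def)
    show "hh a \<in> borel_measurable G" using hh_meas by (simp only: measurable_cong_sets[OF assms(2) refl])
  qed
qed

lemma hh_bound:
  assumes "0 < a" "a \<le> 1" "0 < d" "d < 1" "u \<in> {0..1}"
  shows "welfare_price (FSi a d) (return borel 1) (quantile (FSi a d) u) \<le> 1 - a + d + hh a u"
proof -
  have "0 \<le> u" "u \<le> 1" using assms(5) by auto
  from wp_bound[OF assms(1-4) this] show ?thesis using \<open>0 \<le> u\<close> by (simp add: hh_def)
qed

lemma wm_bound:
  assumes G: "prob_space G" "sets G = sets borel" "measure G {0..1} = 1"
  assumes "0 < a" "a \<le> 1" "0 < d" "d < 1"
  shows "welfare_mech G (FSi a d) (return borel 1) \<le> 1 - a + d + (\<integral>u. hh a u \<partial>G)"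
proof -
  interpret prob_space G by fact
  have ae: "AE u in G. u \<in> {0..1}" by (rule AE_prob_1) (use G(3) in simp)
  have hi: "integrable G (hh a)" by (rule hh_integrable[OF G(1,2)])
  have "welfare_mech G (FSi a d) (return borel 1) \<le> (\<integral>u. (1 - a + d) + hh a u \<partial>G)"
    unfolding welfare_mech_def
  proof (rule integral_mono_AE')
    show "integrable G (\<lambda>u. 1 - a + d + hh a u)"
      by (intro Bochner_Integration.integrable_add integrable_const hi)
    show "AE u in G. welfare_price (FSi a d) (return borel 1) (quantile (FSi a d) u) \<le> 1 - a + d + hh a u"
      using ae by (rule eventually_mono) (rule hh_bound[OF assms(4-7)])
    have "\<And>u. 0 \<le> 1 - a + d + hh a u" using assms by (simp add: hh_def)
    then show "AE u in G. 0 \<le> 1 - a + d + hh a u" by (intro AE_I2)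
  qed
  also have "\<dots> = (\<integral>u. (1 - a + d) \<partial>G) + (\<integral>u. hh a u \<partial>G)"
    by (rule Bochner_Integration.integral_add[OF integrable_const hi])
  also have "(\<integral>u. (1 - a + d) \<partial>G) = 1 - a + d"
    by (simp add: prob_space)
  finally show ?thesis .
qed

definition ww :: "nat \<Rightarrow> nat \<Rightarrow> real" where
  "ww n k = (if k = 0 then exp (-1) else exp (-1) * (exp (real k / real n) - exp ((real k - 1) / real n)))"

definition aa :: "nat \<Rightarrow> nat \<Rightarrow> real" where
  "aa n k = exp (- (real k / real n))"

lemma ww_nonneg: "n > 0 \<Longrightarrow> 0 \<le> ww n k"
  by (auto simp: ww_def divide_right_mono)

lemma ww_sum: "(\<Sum>k\<le>N. ww n k) = exp (-1) * exp (real N / real n)"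
proof (induction N)
  case 0 then show ?case by (simp add: ww_def)
next
  case (Suc N)
  then show ?case by (simp add: ww_def algebra_simps)
qed

lemma ww_aa_sum: "n > 0 \<Longrightarrow> (\<Sum>k\<le>N. ww n k * aa n k) = exp (-1) * (1 + real N * (1 - exp (- 1 / real n)))"
proof (induction N)
  case 0 then show ?case by (simp add: ww_def aa_def)
next
  case (Suc N)
  have e: "(exp ((1 + real N) / real n) - exp (real N / real n)) * exp (- ((1 + real N) / real n))
      = 1 - exp (- 1 / real n)"
  proof -
    have "(exp ((1 + real N) / real n) - exp (real N / real n)) * exp (- ((1 + real N) / real n))
       = exp ((1 + real N) / real n + - ((1 + real N) / real n)) - exp (real N / real n + - ((1 + real N) / real n))"
      by (simp add: left_diff_distrib mult_exp_exp)
    also have "real N / real n + - ((1 + real N) / real n) = - 1 / real n"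
      by (simp add: add_divide_distrib)
    finally show ?thesis by simp
  qed
  have t: "ww n (Suc N) * aa n (Suc N) = exp (-1) * (1 - exp (- 1 / real n))"
    using e by (simp add: ww_def aa_def add.commute)
  have "(\<Sum>k\<le>Suc N. ww n k * aa n k) = exp (-1) * (1 + real N * (1 - exp (- 1 / real n))) + exp (-1) * (1 - exp (- 1 / real n))"
    by (simp only: sum.atMost_Suc Suc.IH[OF Suc.prems] t)
  then show ?case by (simp add: algebra_simps)
qed

lemma exp_bound: "n > 0 \<Longrightarrow> 1 / (real n + 1) \<le> 1 - exp (- 1 / real n)"
proof -
  assume n: "n > 0"
  have "1 + 1 / real n \<le> exp (1 / real n)" by (rule exp_ge_add_one_self)
  then have "exp (- 1 / real n) \<le> 1 / (1 + 1 / real n)"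
    using n by (simp add: exp_minus field_simps)
  also have "1 / (1 + 1 / real n) = 1 - 1 / (real n + 1)"
    using n by (simp add: field_simps)
  finally show ?thesis by simp
qed

lemma pointwise_pos:
  assumes "n > 0" "u > 0"
  shows "(\<Sum>k\<le>N. ww n k * hh (aa n k) u) \<le> exp (-1) * min (u * exp (real N / real n)) 1"
proof (induction N)
  case 0
  then show ?case using assms by (auto simp: ww_def aa_def hh_def min_def)
next
  case (Suc N)
  have step: "ww n (Suc N) * hh (aa n (Suc N)) u \<le>
     exp (-1) * min (u * exp (real (Suc N) / real n)) 1 - exp (-1) * min (u * exp (real N / real n)) 1"
  proof (cases "u \<le> aa n (Suc N)")
    case True
    have "u * exp (real (Suc N) / real n) \<le> 1"
      using True by (simp add: aa_def exp_minus field_simps)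
    moreover have "exp (real N / real n) \<le> exp (real (Suc N) / real n)"
      using assms by (simp add: divide_right_mono)
    ultimately have "u * exp (real N / real n) \<le> 1"
      using assms by (meson mult_left_mono less_imp_le order_trans)
    then show ?thesis using True assms \<open>u * exp (real (Suc N) / real n) \<le> 1\<close>
      by (simp add: ww_def hh_def min_def algebra_simps)
  next
    case False
    have "exp (real N / real n) \<le> exp (real (Suc N) / real n)"
      using assms by (simp add: divide_right_mono)
    then have "u * exp (real N / real n) \<le> u * exp (real (Suc N) / real n)"
      using assms by simp
    then have "min (u * exp (real N / real n)) 1 \<le> min (u * exp (real (Suc N) / real n)) 1"
      by simp
    then show ?thesis using False by (simp add: hh_def)
  qed
  show ?case using Suc step by simp
qed

lemma pointwise:
  assumes "n > 0"
  shows "(\<Sum>k\<le>n. ww n k * hh (aa n k) u) \<le> exp (-1)"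
proof (cases "u > 0")
  case True
  have "exp (-1) * min (u * exp (real n / real n)) 1 \<le> exp (-1)" by simp
  then show ?thesis using pointwise_pos[OF assms True, of n] by linarith
next
  case False
  then have "\<And>k. hh (aa n k) u = 0" by (auto simp: hh_def)
  then show ?thesis by simp
qed


theorem theorem14:
  fixes G :: "real measure"
  assumes "prob_space G" and "sets G = sets borel" and "measure G {0..1} = 1"
  shows "Inf {welfare_mech G FS FB / opt_welfare FS FB | FS FB.
                valid_dist FS \<and> valid_dist FB \<and> opt_welfare FS FB > 0}
         \<le> 1 - exp (-1)"
proof -
  interpret G: prob_space G by fact
  define S where "S = {welfare_mech G FS FB / opt_welfare FS FB | FS FB.
                valid_dist FS \<and> valid_dist FB \<and> opt_welfare FS FB > 0}"
  have bdd: "bdd_below S"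
  proof (rule bdd_belowI)
    fix x assume "x \<in> S"
    then obtain FS FB where x: "x = welfare_mech G FS FB / opt_welfare FS FB"
      and v: "valid_dist FS" "valid_dist FB" "opt_welfare FS FB > 0"
      unfolding S_def by blast
    have "0 \<le> welfare_mech G FS FB"
      unfolding welfare_mech_def by (rule integral_nonneg_AE) (use wp_nonneg[OF v(1,2)] in auto)
    then show "0 \<le> x" using x v(3) by simp
  qed
  have key: "Inf S \<le> 1 - a + d + (\<integral>u. hh a u \<partial>G)"
    if a: "0 < a" "a \<le> 1" and d: "0 < d" "d < 1" for a d
  proof -
    have o: "opt_welfare (FSi a d) (return borel 1) = 1"
      by (rule opt_FSi) (use a d in auto)
    have "welfare_mech G (FSi a d) (return borel 1) / opt_welfare (FSi a d) (return borel 1) \<in> S"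
      unfolding S_def using valid_FSi[of a d] valid_ret o a d by fastforce
    then have "Inf S \<le> welfare_mech G (FSi a d) (return borel 1)"
      using cInf_lower[OF _ bdd] o by fastforce
    also have "\<dots> \<le> 1 - a + d + (\<integral>u. hh a u \<partial>G)"
      by (rule wm_bound[OF assms a d])
    finally show ?thesis .
  qed
  have main: "Inf S \<le> 1 - exp (-1) + e" if e: "e > 0" for e
  proof -
    define n :: nat where "n = nat \<lceil>2 / e\<rceil> + 1"
    define d where "d = min (e / 2) (1 / 2)"
    have n0: "n > 0" unfolding n_def by simp
    have "real n \<ge> 2 / e" unfolding n_def by linarith
    then have ne: "1 / (real n + 1) \<le> e / 2"
      using e by (simp add: field_simps)
    have d0: "0 < d" "d < 1" "d \<le> e / 2" unfolding d_def using e by auto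
    have aa0: "0 < aa n k" "aa n k \<le> 1" for k
      unfolding aa_def by auto
    have ws: "(\<Sum>k\<le>n. ww n k) = 1"
      using n0 by (simp add: ww_sum exp_minus field_simps)
    have "Inf S = (\<Sum>k\<le>n. ww n k * Inf S)"
      by (simp add: sum_distrib_right[symmetric] ws)
    also have "\<dots> \<le> (\<Sum>k\<le>n. ww n k * (1 - aa n k + d + (\<integral>u. hh (aa n k) u \<partial>G)))"
      by (intro sum_mono mult_left_mono key aa0 d0 ww_nonneg n0)
    also have "\<dots> = (1 + d) * (\<Sum>k\<le>n. ww n k) - (\<Sum>k\<le>n. ww n k * aa n k)
        + (\<integral>u. (\<Sum>k\<le>n. ww n k * hh (aa n k) u) \<partial>G)"
    proof -
      have "(\<integral>u. (\<Sum>k\<le>n. ww n k * hh (aa n k) u) \<partial>G) = (\<Sum>k\<le>n. (\<integral>u. ww n k * hh (aa n k) u \<partial>G))"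
        by (rule Bochner_Integration.integral_sum) (simp add: hh_integrable[OF assms(1,2)])
      also have "\<dots> = (\<Sum>k\<le>n. ww n k * (\<integral>u. hh (aa n k) u \<partial>G))"
        by (simp add: integral_mult_right_zero)
      finally have isum: "(\<integral>u. (\<Sum>k\<le>n. ww n k * hh (aa n k) u) \<partial>G) = (\<Sum>k\<le>n. ww n k * (\<integral>u. hh (aa n k) u \<partial>G))" .
      show ?thesis
        unfolding isum by (simp add: algebra_simps sum.distrib sum_subtractf sum_distrib_left sum_distrib_right)
    qed
    also have "(\<integral>u. (\<Sum>k\<le>n. ww n k * hh (aa n k) u) \<partial>G) \<le> (\<integral>u. exp (-1) \<partial>G)"
      by (rule integral_mono) (auto simp: pointwise[OF n0] hh_integrable[OF assms(1,2)])
    also have "(\<integral>u. exp (-1) \<partial>G) = exp (-1)"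
      by (simp add: G.prob_space)
    finally have "Inf S \<le> (1 + d) - exp (-1) * (1 + real n * (1 - exp (- 1 / real n))) + exp (-1)"
      by (simp add: ws ww_aa_sum[OF n0])
    also have "\<dots> = 1 + d - exp (-1) * (real n * (1 - exp (- 1 / real n)))"
      by (simp add: algebra_simps)
    also have "real n * (1 - exp (- 1 / real n)) \<ge> real n / (real n + 1)"
    proof -
      have "real n * (1 / (real n + 1)) \<le> real n * (1 - exp (- 1 / real n))"
        by (rule mult_left_mono[OF exp_bound[OF n0]]) simp
      then show ?thesis by simp
    qed
    then have "1 + d - exp (-1) * (real n * (1 - exp (- 1 / real n))) \<le> 1 + d - exp (-1) * (real n / (real n + 1))"
      by (intro diff_left_mono mult_left_mono) simp_all
    also have "real n / (real n + 1) = 1 - 1 / (real n + 1)"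
      by (simp add: field_simps)
    also have "1 + d - exp (-1) * (1 - 1 / (real n + 1)) = 1 - exp (-1) + d + exp (-1) * (1 / (real n + 1))"
      by (simp add: algebra_simps)
    also have "exp (-1) * (1 / (real n + 1)) \<le> 1 / (real n + 1)"
      by (rule mult_left_le_one_le) simp_all
    finally show ?thesis using d0 ne by linarith
  qed
  show ?thesis
    unfolding S_def[symmetric] by (rule field_le_epsilon) (use main in auto)
qed

end
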